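(* Let $\mathcal M$ be the configuration space of ordered quadruples of distinct points of $\partial\mathbf{H}^2_{\mathbb C}$ modulo the diagonal action of $\mathrm{PU}(2,1)$, with the quotient topology. Then the map $\tau:\mathcal M\to\mathbb C^2\times\mathbb R$, $$\tau:[p_1,p_2,p_3,p_4]\mapsto \bigl(X_1,X_2,\mathbb A\bigr)=\bigl(X(p_1,p_2,p_3,p_4),\,X(p_1,p_3,p_2,p_4),\,\mathbb A(p_1,p_2,p_3)\bigr),$$ is a homeomorphism onto the set $\mathbb M$ of points $(X_1,X_2,A)\in\mathbb C_*^2\times\mathbb R$ (with $\mathbb C_*=\mathbb C\setminus\{0\}$, and $\mathbb M$ carrying the subspace topology from $\mathbb C^2\times\mathbb R$) satisfying $$-2\,\mathrm{Re}(X_1+X_2)-2\,\mathrm{Re}\bigl(X_1\overline{X}_2e^{-2iA}\bigr)+|X_1|^2+|X_2|^2+1=0,$$ $$-\pi/2\le A\le\pi/2,\qquad \mathrm{Re}(X_1e^{-iA})\ge 0.$$ In particular $\mathcal M$ is homeomorphic to $\mathbb M$.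
   Context: Let $\mathbb C^{n,1}$ denote $\mathbb C^{n+1}$ with the Hermitian form $\langle Z,W\rangle=z_1\overline{w}_{n+1}+z_2\overline{w}_2+\cdots+z_n\overline{w}_n+z_{n+1}\overline{w}_1$ of signature $(n,1)$. Complex hyperbolic space $\mathbf H^n_{\mathbb C}$ is the set of negative lines ($\langle Z,Z\rangle<0$) in $\mathbb P\mathbb C^n$; its boundary $\partial\mathbf H^n_{\mathbb C}$ is the set of isotropic (null) lines ($\langle Z,Z\rangle=0$, $Z\neq0$). $\mathrm{PU}(n,1)$ (projectivized unitary group of the form) is the holomorphic isometry group and acts on $\partial\mathbf H^n_{\mathbb C}$. A lift of a boundary point $p$ is a nonzero null vector $P$ representing it. For an ordered quadruple of distinct boundary points with lifts $P_i$, the Korányi–Reimann complex cross-ratio is $X(p_1,p_2,p_3,p_4)=\dfrac{\langle P_3,P_1\rangle\langle P_4,P_2\rangle}{\langle P_4,P_1\rangle\langle P_3,P_2\rangle}$ (independent of lifts). For an ordered triple of distinct boundary points, Cartan's angular invariant is $\mathbb A(p_1,p_2,p_3)=\arg\bigl(-\langle P_1,P_2\rangle\langle P_2,P_3\rangle\langle P_3,P_1\rangle\bigr)\in[-\pi/2,\pi/2]$. Here $n=2$. *)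

theory Defs
  imports "HOL-Analysis.Analysis"
begin

definition quotient_topology :: "'a topology \<Rightarrow> ('a \<Rightarrow> 'b) \<Rightarrow> 'b topology" where
  "quotient_topology X f = topology (\<lambda>U. U \<subseteq> f ` topspace X \<and>
       openin X {x \<in> topspace X. f x \<in> U})"

type_synonym cvec = "complex ^ 3"

definition herm :: "cvec \<Rightarrow> cvec \<Rightarrow> complex" where
  "herm Z W = Z$1 * cnj (W$3) + Z$2 * cnj (W$2) + Z$3 * cnj (W$1)"

definition null_vecs :: "cvec set" where
  "null_vecs = {Z. Z \<noteq> 0 \<and> herm Z Z = 0}"

text \<open>The complex line through v, with the origin removed (a point of PC^2).\<close>
definition cline :: "cvec \<Rightarrow> cvec set" where
  "cline v = {c *s v | c. c \<noteq> 0}"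

text \<open>Boundary of complex hyperbolic 2-space: isotropic lines, with the quotient
  topology from the null cone (= subspace topology of PC^2).\<close>
definition bdry :: "cvec set set" where
  "bdry = cline ` null_vecs"

definition bdry_top :: "cvec set topology" where
  "bdry_top = quotient_topology (subtopology euclidean null_vecs) cline"

definition unitary21 :: "complex ^ 3 ^ 3 \<Rightarrow> bool" where
  "unitary21 U \<longleftrightarrow> (\<forall>Z W. herm (U *v Z) (U *v W) = herm Z W)"

text \<open>Action on boundary points (factors through PU(2,1)).\<close>
definition act :: "complex ^ 3 ^ 3 \<Rightarrow> cvec set \<Rightarrow> cvec set" where
  "act U p = (\<lambda>v. U *v v) ` p"

type_synonym quad = "cvec set \<times> cvec set \<times> cvec set \<times> cvec set"

definition act4 :: "complex ^ 3 ^ 3 \<Rightarrow> quad \<Rightarrow> quad" where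
  "act4 U q = (case q of (p1, p2, p3, p4) \<Rightarrow> (act U p1, act U p2, act U p3, act U p4))"

definition quads :: "quad set" where
  "quads = {(p1, p2, p3, p4). p1 \<in> bdry \<and> p2 \<in> bdry \<and> p3 \<in> bdry \<and> p4 \<in> bdry \<and>
     p1 \<noteq> p2 \<and> p1 \<noteq> p3 \<and> p1 \<noteq> p4 \<and> p2 \<noteq> p3 \<and> p2 \<noteq> p4 \<and> p3 \<noteq> p4}"

definition quads_top :: "quad topology" where
  "quads_top = subtopology (prod_topology bdry_top (prod_topology bdry_top
                 (prod_topology bdry_top bdry_top))) quads"

definition orbit4 :: "quad \<Rightarrow> quad set" where
  "orbit4 q = {q'. \<exists>U. unitary21 U \<and> q' = act4 U q}"

definition config_top :: "quad set topology" where
  "config_top = quotient_topology quads_top orbit4"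

definition lift :: "cvec set \<Rightarrow> cvec" where
  "lift p = (SOME v. v \<in> p)"

definition cross_ratio :: "cvec set \<Rightarrow> cvec set \<Rightarrow> cvec set \<Rightarrow> cvec set \<Rightarrow> complex" where
  "cross_ratio p1 p2 p3 p4 =
     (herm (lift p3) (lift p1) * herm (lift p4) (lift p2)) /
     (herm (lift p4) (lift p1) * herm (lift p3) (lift p2))"

definition cartan :: "cvec set \<Rightarrow> cvec set \<Rightarrow> cvec set \<Rightarrow> real" where
  "cartan p1 p2 p3 =
     Arg (- (herm (lift p1) (lift p2) * herm (lift p2) (lift p3) * herm (lift p3) (lift p1)))"

definition tau :: "quad set \<Rightarrow> complex \<times> complex \<times> real" where
  "tau c = (case (SOME q. q \<in> c) of (p1, p2, p3, p4) \<Rightarrow>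
      (cross_ratio p1 p2 p3 p4, cross_ratio p1 p3 p2 p4, cartan p1 p2 p3))"

definition Mset :: "(complex \<times> complex \<times> real) set" where
  "Mset = {(X1, X2, A). X1 \<noteq> 0 \<and> X2 \<noteq> 0 \<and>
     - 2 * Re (X1 + X2) - 2 * Re (X1 * cnj X2 * exp (- 2 * \<i> * of_real A))
       + (cmod X1)^2 + (cmod X2)^2 + 1 = 0 \<and>
     - pi / 2 \<le> A \<and> A \<le> pi / 2 \<and>
     Re (X1 * exp (- \<i> * of_real A)) \<ge> 0}"

end

theory Submission imports Defs begin

definition mk3 :: "complex \<Rightarrow> complex \<Rightarrow> complex \<Rightarrow> cvec" where
  "mk3 a b c = (\<chi> i. if i = 1 then a else if i = 2 then b else c)"

lemma mk3_nth [simp]: "mk3 a b c $ 1 = a" "mk3 a b c $ 2 = b" "mk3 a b c $ 3 = c"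
  by (simp_all add: mk3_def)

lemma vec3_eq: "(Z::cvec) = W \<longleftrightarrow> Z$1 = W$1 \<and> Z$2 = W$2 \<and> Z$3 = W$3"
  by (simp add: vec_eq_iff forall_3)

lemma herm_scale_left [simp]: "herm (c *s Z) W = c * herm Z W"
  by (simp add: herm_def algebra_simps)
lemma herm_scale_right [simp]: "herm Z (c *s W) = cnj c * herm Z W"
  by (simp add: herm_def algebra_simps)
lemma herm_add_left: "herm (Z + Z') W = herm Z W + herm Z' W"
  by (simp add: herm_def algebra_simps)
lemma herm_cnj: "herm W Z = cnj (herm Z W)"
  by (simp add: herm_def algebra_simps)

definition "e1 = mk3 1 0 0"
definition "e2 = mk3 0 1 0"
definition "e3 = mk3 0 0 1"

lemma herm_e1 [simp]: "herm Z e1 = Z$3" and herm_e3 [simp]: "herm Z e3 = Z$1"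
  by (simp_all add: herm_def e1_def e3_def)

lemma herm_mk3: "herm (mk3 a b c) (mk3 a' b' c') = a * cnj c' + b * cnj b' + c * cnj a'"
  by (simp add: herm_def)

lemma herm_diff_left: "herm (Z - Z') W = herm Z W - herm Z' W"
  by (simp add: herm_def algebra_simps)
lemma herm_diff_right: "herm W (Z - Z') = herm W Z - herm W Z'"
  by (simp add: herm_def algebra_simps)
lemma herm_add_right: "herm W (Z + Z') = herm W Z + herm W Z'"
  by (simp add: herm_def algebra_simps)

lemma herm_eq13_zero:
  assumes "Z$1 = Z$3" "herm Z Z = 0" shows "Z = 0"
proof -
  have "Re (herm Z Z) = 2*((Re(Z$1))^2+(Im (Z$1))^2) + ((Re(Z$2))^2 + (Im(Z$2))^2)"
    using assms(1) by (simp add: herm_def power2_eq_square)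
  hence e: "2*((Re(Z$1))^2+(Im (Z$1))^2) + ((Re(Z$2))^2 + (Im(Z$2))^2) = 0" using assms by simp
  have "(Re(Z$1))^2+(Im (Z$1))^2 = 0" "(Re(Z$2))^2+(Im (Z$2))^2 = 0"
    using e by (smt (verit) zero_le_power2)+
  hence "Z$1 = 0" "Z$2 = 0" by (auto simp: complex_eq_iff)
  thus ?thesis using assms(1) by (simp add: vec3_eq)
qed

lemma null_orth_prop:
  assumes P: "P \<in> null_vecs" and Q: "Q \<in> null_vecs" and h: "herm P Q = 0"
  shows "\<exists>c. c \<noteq> 0 \<and> Q = c *s P"
proof -
  define vP where "vP = P$1 - P$3"
  define vQ where "vQ = Q$1 - Q$3"
  have PP: "herm P P = 0" "P \<noteq> 0" and QQ: "herm Q Q = 0" "Q \<noteq> 0"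
    using P Q by (auto simp: null_vecs_def)
  have vP0: "vP \<noteq> 0"
    using herm_eq13_zero[of P] PP vP_def by auto
  define W where "W = vQ *s P - vP *s Q"
  have "W$1 = W$3" by (simp add: W_def vP_def vQ_def algebra_simps)
  moreover have "herm W W = 0"
  proof -
    have hQP: "herm Q P = 0" using h herm_cnj[of Q P] by simp
    show ?thesis unfolding W_def
      by (simp add: herm_diff_left herm_diff_right PP QQ h hQP)
  qed
  ultimately have "W = 0" by (rule herm_eq13_zero)
  hence "Q = (vQ / vP) *s P"
    using vP0 by (simp add: W_def vec3_eq field_simps)
  moreover have "vQ \<noteq> 0"
    using calculation QQ by auto
  ultimately show ?thesis using vP0 by (intro exI[of _ "vQ/vP"]) auto
qed

lemma cline_scale: "c \<noteq> 0 \<Longrightarrow> cline (c *s v) = cline v"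
proof -
  assume c: "c \<noteq> 0"
  have "cline (c *s v) \<subseteq> cline v"
  proof
    fix x assume "x \<in> cline (c *s v)"
    then obtain d where d: "d \<noteq> 0" "x = d *s (c *s v)" by (auto simp: cline_def)
    have "x = (d * c) *s v" using d by (simp add: vector_smult_assoc)
    thus "x \<in> cline v" using d c by (auto simp: cline_def)
  qed
  moreover have "cline v \<subseteq> cline (c *s v)"
  proof
    fix x assume "x \<in> cline v"
    then obtain d where d: "d \<noteq> 0" "x = d *s v" by (auto simp: cline_def)
    have "x = (d / c) *s (c *s v)" using d c by (simp add: vector_smult_assoc)
    moreover have "d / c \<noteq> 0" using d c by simp
    ultimately show "x \<in> cline (c *s v)" unfolding cline_def by blast
  qed
  ultimately show ?thesis by blast
qed

lemma self_in_cline: "v \<in> cline v"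
  unfolding cline_def by (auto intro!: exI[of _ 1])

lemma cline_eq_iff: "cline x = cline v \<longleftrightarrow> (\<exists>c. c \<noteq> 0 \<and> x = c *s v)"
proof
  assume "cline x = cline v"
  then have "x \<in> cline v" using self_in_cline[of x] by simp
  then show "\<exists>c. c \<noteq> 0 \<and> x = c *s v" by (auto simp: cline_def)
next
  assume "\<exists>c. c \<noteq> 0 \<and> x = c *s v"
  then show "cline x = cline v" using cline_scale by auto
qed

lemma lift_cline: "\<exists>c. c \<noteq> 0 \<and> lift (cline v) = c *s v"
proof -
  have "lift (cline v) \<in> cline v" unfolding lift_def by (rule someI, rule self_in_cline)
  thus ?thesis by (auto simp: cline_def)
qed

lemma null_cline_eq_iff:
  assumes "P \<in> null_vecs" "Q \<in> null_vecs"
  shows "cline P = cline Q \<longleftrightarrow> herm P Q = 0"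
proof
  assume "cline P = cline Q"
  then obtain c where "P = c *s Q" using cline_eq_iff by blast
  thus "herm P Q = 0" using assms by (simp add: null_vecs_def)
next
  assume "herm P Q = 0"
  then obtain c where "c \<noteq> 0" "Q = c *s P" using null_orth_prop assms by blast
  thus "cline P = cline Q" using cline_scale by simp
qed

lemma null_scale: "c \<noteq> 0 \<Longrightarrow> P \<in> null_vecs \<Longrightarrow> c *s P \<in> null_vecs"
  by (simp add: null_vecs_def vec_eq_iff)

lemma mat_scale: "(U::complex^3^3) *v (c *s v) = c *s (U *v v)"
  by (simp add: vec_eq_iff matrix_vector_mult_def sum_distrib_left algebra_simps)

lemma act_cline: "act U (cline v) = cline (U *v v)"
proof -
  have "act U (cline v) = {U *v (c *s v) | c. c \<noteq> 0}" unfolding act_def cline_def by auto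
  also have "\<dots> = cline (U *v v)" unfolding cline_def mat_scale by simp
  finally show ?thesis .
qed

definition crv :: "cvec \<Rightarrow> cvec \<Rightarrow> cvec \<Rightarrow> cvec \<Rightarrow> complex" where
  "crv P1 P2 P3 P4 = (herm P3 P1 * herm P4 P2) / (herm P4 P1 * herm P3 P2)"

definition cartv :: "cvec \<Rightarrow> cvec \<Rightarrow> cvec \<Rightarrow> complex" where
  "cartv P1 P2 P3 = - (herm P1 P2 * herm P2 P3 * herm P3 P1)"

lemma crv_scale:
  assumes "a \<noteq> 0" "b \<noteq> 0" "c \<noteq> 0" "d \<noteq> 0"
  shows "crv (a *s P1) (b *s P2) (c *s P3) (d *s P4) = crv P1 P2 P3 P4"
proof -
  have "crv (a *s P1) (b *s P2) (c *s P3) (d *s P4) =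
     ((c * cnj a * d * cnj b) * (herm P3 P1 * herm P4 P2)) / ((c * cnj a * d * cnj b) * (herm P4 P1 * herm P3 P2))"
    by (simp add: crv_def algebra_simps)
  also have "\<dots> = crv P1 P2 P3 P4" using assms by (simp add: crv_def)
  finally show ?thesis .
qed

lemma cartv_scale:
  assumes "a \<noteq> 0" "b \<noteq> 0" "c \<noteq> 0"
  shows "Arg (cartv (a *s P1) (b *s P2) (c *s P3)) = Arg (cartv P1 P2 P3)"
proof -
  have n: "a * cnj a = of_real ((cmod a)^2)" "b * cnj b = of_real ((cmod b)^2)" "c * cnj c = of_real ((cmod c)^2)"
    by (simp_all only: complex_norm_square)
  have "cartv (a *s P1) (b *s P2) (c *s P3) = (a * cnj a) * (b * cnj b) * (c * cnj c) * cartv P1 P2 P3"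
    by (simp add: cartv_def algebra_simps)
  also have "\<dots> = of_real ((cmod a)^2 * (cmod b)^2 * (cmod c)^2) * cartv P1 P2 P3"
    unfolding n by simp
  finally have "cartv (a *s P1) (b *s P2) (c *s P3) = of_real ((cmod a)^2 * (cmod b)^2 * (cmod c)^2) * cartv P1 P2 P3" .
  moreover have "(cmod a)^2 * (cmod b)^2 * (cmod c)^2 > 0" using assms by simp
  ultimately show ?thesis by (metis Arg_times_of_real)
qed

lemma cross_ratio_cline: "cross_ratio (cline P1) (cline P2) (cline P3) (cline P4) = crv P1 P2 P3 P4"
proof -
  obtain a b c d where "a \<noteq> 0" "b \<noteq> 0" "c \<noteq> 0" "d \<noteq> 0" and
    "lift (cline P1) = a *s P1" "lift (cline P2) = b *s P2" "lift (cline P3) = c *s P3" "lift (cline P4) = d *s P4"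
    using lift_cline by metis
  hence "cross_ratio (cline P1) (cline P2) (cline P3) (cline P4) = crv (a *s P1) (b *s P2) (c *s P3) (d *s P4)"
    by (simp add: cross_ratio_def crv_def)
  thus ?thesis using crv_scale \<open>a \<noteq> 0\<close> \<open>b \<noteq> 0\<close> \<open>c \<noteq> 0\<close> \<open>d \<noteq> 0\<close> by simp
qed

lemma cartan_cline: "cartan (cline P1) (cline P2) (cline P3) = Arg (cartv P1 P2 P3)"
proof -
  obtain a b c where "a \<noteq> 0" "b \<noteq> 0" "c \<noteq> 0" and
    "lift (cline P1) = a *s P1" "lift (cline P2) = b *s P2" "lift (cline P3) = c *s P3"
    using lift_cline by metis
  hence "cartan (cline P1) (cline P2) (cline P3) = Arg (cartv (a *s P1) (b *s P2) (c *s P3))"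
    by (simp add: cartan_def cartv_def)
  thus ?thesis using cartv_scale \<open>a \<noteq> 0\<close> \<open>b \<noteq> 0\<close> \<open>c \<noteq> 0\<close> by simp
qed

lemma crv_unitary: "unitary21 U \<Longrightarrow> crv (U *v P1) (U *v P2) (U *v P3) (U *v P4) = crv P1 P2 P3 P4"
  by (simp add: crv_def unitary21_def)
lemma cartv_unitary: "unitary21 U \<Longrightarrow> cartv (U *v P1) (U *v P2) (U *v P3) = cartv P1 P2 P3"
  by (simp add: cartv_def unitary21_def)

lemma herm_nondeg: "(\<And>W. herm Z W = 0) \<Longrightarrow> Z = 0"
proof -
  assume h: "\<And>W. herm Z W = 0"
  have "Z$3 = 0" "Z$1 = 0" "Z$2 = 0" using h[of e1] h[of e3] h[of e2] by (simp_all add: herm_def e1_def e2_def e3_def)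
  thus "Z = 0" by (simp add: vec3_eq)
qed

lemma unitary_inj: "unitary21 U \<Longrightarrow> U *v x = U *v y \<Longrightarrow> x = y"
proof -
  assume U: "unitary21 U" and e: "U *v x = U *v y"
  have "herm (x - y) W = 0" for W
  proof -
    have "herm (x - y) W = herm (U *v (x - y)) (U *v W)" using U by (simp add: unitary21_def)
    also have "\<dots> = 0" using e by (simp add: matrix_vector_mult_diff_distrib herm_def)
    finally show ?thesis .
  qed
  hence "x - y = 0" by (rule herm_nondeg)
  thus "x = y" by simp
qed

lemma unitary_mult: "unitary21 A \<Longrightarrow> unitary21 B \<Longrightarrow> unitary21 (A ** B)"
  by (simp add: unitary21_def matrix_vector_mul_assoc[symmetric])

lemma unitary_id: "unitary21 (mat 1)"
  by (simp add: unitary21_def)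

lemma unitary_inverse:
  assumes U: "unitary21 U" shows "\<exists>U'. unitary21 U' \<and> U' ** U = mat 1 \<and> U ** U' = mat 1"
proof -
  have "inj ((*v) U)" using unitary_inj[OF U] by (auto simp: inj_def)
  then obtain U' where L: "U' ** U = mat 1" using matrix_left_invertible_injective by blast
  hence R: "U ** U' = mat 1" using matrix_left_right_inverse by blast
  have "unitary21 U'" unfolding unitary21_def
  proof (intro allI)
    fix Z W
    have "herm (U' *v Z) (U' *v W) = herm (U *v (U' *v Z)) (U *v (U' *v W))"
      using U by (simp add: unitary21_def)
    also have "\<dots> = herm Z W" by (simp add: matrix_vector_mul_assoc R)
    finally show "herm (U' *v Z) (U' *v W) = herm Z W" .
  qed
  thus ?thesis using L R by blast
qed

definition Pm :: "cvec \<times> cvec \<times> cvec \<times> cvec \<Rightarrow> quad" where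
  "Pm v = (case v of (a, b, c, d) \<Rightarrow> (cline a, cline b, cline c, cline d))"

definition tau0 :: "quad \<Rightarrow> complex \<times> complex \<times> real" where
  "tau0 q = (case q of (p1, p2, p3, p4) \<Rightarrow>
      (cross_ratio p1 p2 p3 p4, cross_ratio p1 p3 p2 p4, cartan p1 p2 p3))"

definition Fv :: "cvec \<times> cvec \<times> cvec \<times> cvec \<Rightarrow> complex \<times> complex \<times> real" where
  "Fv v = (case v of (a, b, c, d) \<Rightarrow> (crv a b c d, crv a c b d, Arg (cartv a b c)))"

lemma tau0_Pm: "tau0 (Pm v) = Fv v"
  by (cases v) (simp add: tau0_def Pm_def Fv_def cross_ratio_cline cartan_cline)

definition Dset :: "(cvec \<times> cvec \<times> cvec \<times> cvec) set" where
  "Dset = {(a, b, c, d). a \<in> null_vecs \<and> b \<in> null_vecs \<and> c \<in> null_vecs \<and> d \<in> null_vecs \<and>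
     herm a b \<noteq> 0 \<and> herm a c \<noteq> 0 \<and> herm a d \<noteq> 0 \<and> herm b c \<noteq> 0 \<and> herm b d \<noteq> 0 \<and> herm c d \<noteq> 0}"

definition Nset :: "(cvec \<times> cvec \<times> cvec \<times> cvec) set" where
  "Nset = null_vecs \<times> null_vecs \<times> null_vecs \<times> null_vecs"

lemma bdry_cline: "p \<in> bdry \<longleftrightarrow> (\<exists>P \<in> null_vecs. p = cline P)"
  by (auto simp: bdry_def)

lemma quads_Pm: "q \<in> quads \<longleftrightarrow> (\<exists>v \<in> Dset. q = Pm v)"
proof
  assume "q \<in> quads"
  then obtain p1 p2 p3 p4 where q: "q = (p1, p2, p3, p4)" and
    m: "p1 \<in> bdry" "p2 \<in> bdry" "p3 \<in> bdry" "p4 \<in> bdry" and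
    d: "p1 \<noteq> p2" "p1 \<noteq> p3" "p1 \<noteq> p4" "p2 \<noteq> p3" "p2 \<noteq> p4" "p3 \<noteq> p4"
    unfolding quads_def by auto
  obtain a b c e where n: "a \<in> null_vecs" "b \<in> null_vecs" "c \<in> null_vecs" "e \<in> null_vecs"
    and p: "p1 = cline a" "p2 = cline b" "p3 = cline c" "p4 = cline e"
    using m by (auto simp: bdry_cline)
  have "(a, b, c, e) \<in> Dset" using n d p null_cline_eq_iff[OF n(1) n(2)] null_cline_eq_iff[OF n(1) n(3)]
      null_cline_eq_iff[OF n(1) n(4)] null_cline_eq_iff[OF n(2) n(3)] null_cline_eq_iff[OF n(2) n(4)]
      null_cline_eq_iff[OF n(3) n(4)] by (auto simp: Dset_def)
  thus "\<exists>v \<in> Dset. q = Pm v" using q p by (intro bexI[of _ "(a,b,c,e)"]) (auto simp: Pm_def)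
next
  assume "\<exists>v \<in> Dset. q = Pm v"
  then obtain a b c e where v: "(a, b, c, e) \<in> Dset" "q = Pm (a, b, c, e)" by auto
  hence n: "a \<in> null_vecs" "b \<in> null_vecs" "c \<in> null_vecs" "e \<in> null_vecs" by (auto simp: Dset_def)
  show "q \<in> quads" using v n null_cline_eq_iff[OF n(1) n(2)] null_cline_eq_iff[OF n(1) n(3)]
      null_cline_eq_iff[OF n(1) n(4)] null_cline_eq_iff[OF n(2) n(3)] null_cline_eq_iff[OF n(2) n(4)]
      null_cline_eq_iff[OF n(3) n(4)]
    by (auto simp: Dset_def quads_def Pm_def bdry_cline)
qed

definition Uv :: "complex^3^3 \<Rightarrow> cvec \<times> cvec \<times> cvec \<times> cvec \<Rightarrow> cvec \<times> cvec \<times> cvec \<times> cvec" where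
  "Uv U v = (case v of (a, b, c, d) \<Rightarrow> (U *v a, U *v b, U *v c, U *v d))"

lemma act4_Pm: "act4 U (Pm v) = Pm (Uv U v)"
  by (cases v) (simp add: act4_def Pm_def Uv_def act_cline)

lemma Fv_Uv: "unitary21 U \<Longrightarrow> Fv (Uv U v) = Fv v"
  by (cases v) (simp add: Fv_def Uv_def crv_unitary cartv_unitary)

lemma tau0_act4: "unitary21 U \<Longrightarrow> q \<in> quads \<Longrightarrow> tau0 (act4 U q) = tau0 q"
  using quads_Pm act4_Pm tau0_Pm Fv_Uv by metis

lemma act4_id: "act4 (mat 1) q = q"
  by (cases q) (simp add: act4_def act_def)

lemma act4_mult: "act4 (A ** B) q = act4 A (act4 B q)"
  by (cases q) (simp add: act4_def act_def image_image matrix_vector_mul_assoc[symmetric])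

definition equiv4 :: "quad \<Rightarrow> quad \<Rightarrow> bool" where
  "equiv4 q q' \<longleftrightarrow> (\<exists>U. unitary21 U \<and> q' = act4 U q)"

lemma equiv4_refl: "equiv4 q q"
  unfolding equiv4_def using unitary_id act4_id by metis

lemma equiv4_sym: "equiv4 q q' \<Longrightarrow> equiv4 q' q"
  unfolding equiv4_def using unitary_inverse act4_mult act4_id by metis

lemma equiv4_trans: "equiv4 q q' \<Longrightarrow> equiv4 q' q'' \<Longrightarrow> equiv4 q q''"
  unfolding equiv4_def using unitary_mult act4_mult by metis

lemma orbit4_eq: "equiv4 q q' \<Longrightarrow> orbit4 q = orbit4 q'"
  unfolding orbit4_def equiv4_def[symmetric] using equiv4_sym equiv4_trans by blast

lemma orbit4_self: "q \<in> orbit4 q"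
  unfolding orbit4_def equiv4_def[symmetric] using equiv4_refl by simp

lemma tau_orbit4: assumes "q \<in> quads" shows "tau (orbit4 q) = tau0 q"
proof -
  obtain q' where q': "q' = (SOME x. x \<in> orbit4 q)" by simp
  hence "q' \<in> orbit4 q" using orbit4_self by (metis someI)
  then obtain U where "unitary21 U" "q' = act4 U q" by (auto simp: orbit4_def)
  hence "tau0 q' = tau0 q" using tau0_act4 assms by simp
  moreover have "tau (orbit4 q) = tau0 q'" using q' by (simp add: tau_def tau0_def)
  ultimately show ?thesis by simp
qed

definition hx :: "cvec \<Rightarrow> cvec \<Rightarrow> cvec" where
  "hx A B = mk3 (cnj (A$1 * B$2 - A$2 * B$1)) (cnj (A$3 * B$1 - A$1 * B$3)) (cnj (A$2 * B$3 - A$3 * B$2))"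

lemma herm_hx: "herm Z (hx A B) = Z$1 * (A$2 * B$3 - A$3 * B$2) + Z$2 * (A$3 * B$1 - A$1 * B$3) + Z$3 * (A$1 * B$2 - A$2 * B$1)"
  by (simp add: herm_def hx_def)

lemma herm_hx_self: "herm (hx A B) (hx A B) = herm A B * herm B A - herm A A * herm B B"
  by (simp add: herm_def hx_def algebra_simps)

definition cols :: "cvec \<Rightarrow> cvec \<Rightarrow> cvec \<Rightarrow> complex^3^3" where
  "cols E1 E2 E3 = (\<chi> i j. if j = 1 then E1$i else if j = 2 then E2$i else E3$i)"

lemma cols_mult: "cols E1 E2 E3 *v Z = Z$1 *s E1 + Z$2 *s E2 + Z$3 *s E3"
  by (simp add: vec_eq_iff cols_def matrix_vector_mult_def sum_3 algebra_simps)

lemma cols_e1: "cols E1 E2 E3 *v e1 = E1" and cols_e3: "cols E1 E2 E3 *v e3 = E3"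
  by (simp_all add: cols_mult e1_def e3_def)

lemma cols_unitary:
  assumes "herm E1 E1 = 0" "herm E3 E3 = 0" "herm E1 E3 = 1" "herm E2 E2 = 1"
    "herm E1 E2 = 0" "herm E3 E2 = 0"
  shows "unitary21 (cols E1 E2 E3)"
proof -
  have c: "herm E3 E1 = 1" "herm E2 E1 = 0" "herm E2 E3 = 0"
    using assms herm_cnj[of E3 E1] herm_cnj[of E2 E1] herm_cnj[of E2 E3] by simp_all
  show ?thesis unfolding unitary21_def cols_mult
    by (simp add: herm_add_left herm_add_right assms c) (simp add: herm_def)
qed

definition diag3 :: "complex \<Rightarrow> complex \<Rightarrow> complex \<Rightarrow> complex^3^3" where
  "diag3 a b c = (\<chi> i j. if i = j then mk3 a b c $ i else 0)"

lemma diag3_mult: "diag3 a b c *v Z = mk3 (a * Z$1) (b * Z$2) (c * Z$3)"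
  by (simp add: vec_eq_iff forall_3 diag3_def matrix_vector_mult_def sum_3)

lemma diag3_unitary: "a * cnj c = 1 \<Longrightarrow> b * cnj b = 1 \<Longrightarrow> unitary21 (diag3 a b c)"
proof -
  assume h: "a * cnj c = 1" "b * cnj b = 1"
  hence h': "c * cnj a = 1" by (metis complex_cnj_cnj complex_cnj_mult complex_cnj_one mult.commute)
  show ?thesis unfolding unitary21_def diag3_mult herm_def
  proof (intro allI)
    fix Z W :: cvec
    have "a * Z $ 1 * cnj (c * W $ 3) + b * Z $ 2 * cnj (b * W $ 2) + c * Z $ 3 * cnj (a * W $ 1)
      = (a * cnj c) * (Z $ 1 * cnj (W $ 3)) + (b * cnj b) * (Z $ 2 * cnj (W $ 2)) + (c * cnj a) * (Z $ 3 * cnj (W $ 1))"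
      by (simp add: mult_ac)
    thus "mk3 (a * Z $ 1) (b * Z $ 2) (c * Z $ 3) $ 1 * cnj (mk3 (a * W $ 1) (b * W $ 2) (c * W $ 3) $ 3) +
         mk3 (a * Z $ 1) (b * Z $ 2) (c * Z $ 3) $ 2 * cnj (mk3 (a * W $ 1) (b * W $ 2) (c * W $ 3) $ 2) +
         mk3 (a * Z $ 1) (b * Z $ 2) (c * Z $ 3) $ 3 * cnj (mk3 (a * W $ 1) (b * W $ 2) (c * W $ 3) $ 1) =
         Z $ 1 * cnj (W $ 3) + Z $ 2 * cnj (W $ 2) + Z $ 3 * cnj (W $ 1)"
      using h h' by (simp only: mk3_nth) simp
  qed
qed

lemma unitary_null: "unitary21 U \<Longrightarrow> P \<in> null_vecs \<Longrightarrow> U *v P \<in> null_vecs"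
proof -
  assume U: "unitary21 U" and P: "P \<in> null_vecs"
  have "U *v P \<noteq> 0"
  proof
    assume "U *v P = 0"
    hence "U *v P = U *v 0" by simp
    hence "P = 0" using unitary_inj[OF U] by blast
    thus False using P by (simp add: null_vecs_def)
  qed
  thus ?thesis using U P by (simp add: null_vecs_def unitary21_def)
qed

lemma Dset_Uv: "unitary21 U \<Longrightarrow> v \<in> Dset \<Longrightarrow> Uv U v \<in> Dset"
  by (cases v) (auto simp: Dset_def Uv_def unitary_null unitary21_def)

lemma Dset_iff: "v \<in> Dset \<longleftrightarrow> v \<in> Nset \<and> Pm v \<in> quads"
proof
  assume "v \<in> Dset" thus "v \<in> Nset \<and> Pm v \<in> quads"
    using quads_Pm by (cases v) (auto simp: Dset_def Nset_def)
next
  assume a: "v \<in> Nset \<and> Pm v \<in> quads"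
  obtain a b c d where v: "v = (a, b, c, d)" by (cases v)
  hence n: "a \<in> null_vecs" "b \<in> null_vecs" "c \<in> null_vecs" "d \<in> null_vecs" using a by (auto simp: Nset_def)
  show "v \<in> Dset" using a v n null_cline_eq_iff[OF n(1) n(2)] null_cline_eq_iff[OF n(1) n(3)]
      null_cline_eq_iff[OF n(1) n(4)] null_cline_eq_iff[OF n(2) n(3)] null_cline_eq_iff[OF n(2) n(4)]
      null_cline_eq_iff[OF n(3) n(4)]
    by (auto simp: Dset_def quads_def Pm_def)
qed

lemma e1_null: "e1 \<in> null_vecs" and e3_null: "e3 \<in> null_vecs"
  by (simp_all add: null_vecs_def e1_def e3_def herm_def vec3_eq)

lemma mk3_null: "mk3 w z 1 \<in> null_vecs \<longleftrightarrow> w + cnj w + z * cnj z = 0"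
  by (auto simp: null_vecs_def herm_def vec3_eq algebra_simps)

lemma normal_form:
  assumes v: "(P1, P2, P3, P4) \<in> Dset"
  shows "\<exists>U w3 z3 w4 z4. unitary21 U \<and> cmod w3 = 1 \<and>
     act4 U (Pm (P1, P2, P3, P4)) = Pm (e1, e3, mk3 w3 z3 1, mk3 w4 z4 1) \<and>
     (e1, e3, mk3 w3 z3 1, mk3 w4 z4 1) \<in> Dset"
proof -
  have n: "P1 \<in> null_vecs" "P2 \<in> null_vecs" "P3 \<in> null_vecs" "P4 \<in> null_vecs"
    and hne: "herm P1 P2 \<noteq> 0" "herm P1 P3 \<noteq> 0" "herm P1 P4 \<noteq> 0" "herm P2 P3 \<noteq> 0"
      "herm P2 P4 \<noteq> 0" "herm P3 P4 \<noteq> 0"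
    using v by (auto simp: Dset_def)
  have hn: "herm P1 P1 = 0" "herm P2 P2 = 0" using n by (auto simp: null_vecs_def)
  define h12 where "h12 = herm P1 P2"
  define E1 where "E1 = P1"
  define E3 where "E3 = (1 / cnj h12) *s P2"
  define E2 where "E2 = hx E1 E3"
  have g1: "herm E1 E1 = 0" "herm E3 E3 = 0" using hn by (simp_all add: E1_def E3_def)
  have g2: "herm E1 E3 = 1" using hne(1) by (simp add: E1_def E3_def h12_def)
  have g3: "herm E3 E1 = 1" using g2 herm_cnj[of E3 E1] by simp
  have g4: "herm E2 E2 = 1" unfolding E2_def herm_hx_self using g1 g2 g3 by simp
  have g5: "herm E1 E2 = 0" "herm E3 E2 = 0" unfolding E2_def herm_hx by (simp_all add: algebra_simps)
  define M where "M = cols E1 E2 E3"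
  have M: "unitary21 M" unfolding M_def using g1 g2 g4 g5 by (intro cols_unitary) auto
  obtain U' where U': "unitary21 U'" "U' ** M = mat 1" using unitary_inverse[OF M] by blast
  have "U' *v E1 = U' *v (M *v e1)" by (simp add: M_def cols_e1)
  also have "\<dots> = e1" by (simp add: matrix_vector_mul_assoc U'(2))
  finally have U'E1: "U' *v E1 = e1" .
  have "U' *v E3 = U' *v (M *v e3)" by (simp add: M_def cols_e3)
  also have "\<dots> = e3" by (simp add: matrix_vector_mul_assoc U'(2))
  finally have U'E3: "U' *v E3 = e3" .
  note U'E = U'E1 U'E3
  have P2E: "P2 = cnj h12 *s E3" using hne(1) by (simp add: E3_def h12_def vector_smult_assoc)
  have UP1: "U' *v P1 = e1" using U'E E1_def by simp
  have UP2: "U' *v P2 = cnj h12 *s e3" using U'E P2E by (simp add: mat_scale)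
  define Q3 where "Q3 = U' *v P3"
  define Q4 where "Q4 = U' *v P4"
  have hcnj: "herm P3 P1 \<noteq> 0" "herm P4 P1 \<noteq> 0" "herm P3 P2 \<noteq> 0" "herm P4 P3 \<noteq> 0"
    using hne herm_cnj[of P3 P1] herm_cnj[of P4 P1] herm_cnj[of P3 P2] herm_cnj[of P4 P3] by auto
  have Q33: "Q3$3 = herm P3 P1" using U'(1) UP1 unfolding Q3_def unitary21_def
    by (metis herm_e1)
  have Q43: "Q4$3 = herm P4 P1" using U'(1) UP1 unfolding Q4_def unitary21_def
    by (metis herm_e1)
  have "h12 * Q3$1 = herm P3 P2" using U'(1) UP2 unfolding Q3_def unitary21_def
    by (metis herm_e3 herm_scale_right complex_cnj_cnj)
  hence Q31: "Q3$1 \<noteq> 0" using hcnj by auto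
  have Q3ne: "Q3$3 \<noteq> 0" and Q4ne: "Q4$3 \<noteq> 0" using Q33 Q43 hcnj by auto
  define a where "a = Q3$1 / Q3$3"
  have a0: "a \<noteq> 0" using Q31 Q3ne by (simp add: a_def)
  define l where "l = 1 / sqrt (cmod a)"
  have l0: "l > 0" using a0 by (simp add: l_def)
  have ll: "l * l * cmod a = 1" using a0 by (simp add: l_def)
  define D where "D = diag3 (complex_of_real l) 1 (1 / complex_of_real l)"
  have D: "unitary21 D" unfolding D_def using l0 by (intro diag3_unitary) simp_all
  define V where "V = D ** U'"
  have V: "unitary21 V" unfolding V_def using D U' by (simp add: unitary_mult)
  define w3 where "w3 = complex_of_real (l * l) * a"
  define z3 where "z3 = complex_of_real l * (Q3$2 / Q3$3)"
  define w4 where "w4 = complex_of_real (l * l) * (Q4$1 / Q4$3)"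
  define z4 where "z4 = complex_of_real l * (Q4$2 / Q4$3)"
  have cw3: "cmod w3 = 1" using ll l0 by (simp add: w3_def norm_mult)
  have l0': "complex_of_real l \<noteq> 0" using l0 by simp
  have VP1: "V *v P1 = complex_of_real l *s e1"
    by (simp add: V_def matrix_vector_mul_assoc[symmetric] UP1 D_def diag3_mult e1_def vec3_eq)
  have VP2: "V *v P2 = (cnj h12 / complex_of_real l) *s e3"
    by (simp add: V_def matrix_vector_mul_assoc[symmetric] UP2 D_def diag3_mult e3_def vec3_eq)
  have VP3: "V *v P3 = (Q3$3 / complex_of_real l) *s mk3 w3 z3 1"
    using l0' Q3ne by (simp add: V_def matrix_vector_mul_assoc[symmetric] Q3_def[symmetric] D_def diag3_mult
      vec3_eq w3_def z3_def a_def field_simps)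
  have VP4: "V *v P4 = (Q4$3 / complex_of_real l) *s mk3 w4 z4 1"
    using l0' Q4ne by (simp add: V_def matrix_vector_mul_assoc[symmetric] Q4_def[symmetric] D_def diag3_mult
      vec3_eq w4_def z4_def field_simps)
  have s0: "cnj h12 / complex_of_real l \<noteq> 0" "Q3$3 / complex_of_real l \<noteq> 0" "Q4$3 / complex_of_real l \<noteq> 0"
    using l0' Q3ne Q4ne hne(1) by (simp_all add: h12_def)
  have eqPm: "act4 V (Pm (P1, P2, P3, P4)) = Pm (e1, e3, mk3 w3 z3 1, mk3 w4 z4 1)"
  proof -
    have "act4 V (Pm (P1, P2, P3, P4)) = Pm (V *v P1, V *v P2, V *v P3, V *v P4)" by (simp add: act4_Pm Uv_def)
    also have "\<dots> = Pm (e1, e3, mk3 w3 z3 1, mk3 w4 z4 1)"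
      unfolding VP1 VP2 VP3 VP4 Pm_def using cline_scale[OF s0(1)] cline_scale[OF s0(2)] cline_scale[OF s0(3)]
        cline_scale[OF l0'] by simp
    finally show ?thesis .
  qed
  have "Uv V (P1, P2, P3, P4) \<in> Dset" using Dset_Uv[OF V v] .
  hence nn: "V *v P3 \<in> null_vecs" "V *v P4 \<in> null_vecs" and q: "Pm (Uv V (P1, P2, P3, P4)) \<in> quads"
    using Dset_iff by (auto simp: Uv_def Dset_def)
  have "mk3 w3 z3 1 = (complex_of_real l / Q3$3) *s (V *v P3)" using VP3 l0' Q3ne by (simp add: vector_smult_assoc)
  hence n3: "mk3 w3 z3 1 \<in> null_vecs" using nn l0' Q3ne by (simp add: null_scale)
  have "mk3 w4 z4 1 = (complex_of_real l / Q4$3) *s (V *v P4)" using VP4 l0' Q4ne by (simp add: vector_smult_assoc)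
  hence n4: "mk3 w4 z4 1 \<in> null_vecs" using nn l0' Q4ne by (simp add: null_scale)
  have "(e1, e3, mk3 w3 z3 1, mk3 w4 z4 1) \<in> Dset"
    unfolding Dset_iff using q eqPm n3 n4 e1_null e3_null by (auto simp: Nset_def act4_Pm[symmetric])
  thus ?thesis using V cw3 eqPm by blast
qed

lemma Fv_nf: "Fv (e1, e3, mk3 w3 z3 1, mk3 w4 z4 1) =
   (w4 / w3, (w4 + z4 * cnj z3 + cnj w3) / cnj w3, Arg (- cnj w3))"
  by (simp add: Fv_def crv_def cartv_def herm_def e1_def e3_def)

lemma key_alg: "e * c = (1::complex) \<Longrightarrow> w4 + cw4 = - z4 * cz4 \<Longrightarrow> e + c = z3 * cz3 \<Longrightarrow>
  w4 * e + cw4 * c + (w4 + z4 * cz3 - e) * c + (cw4 + cz4 * z3 - c) * e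
  - ((-w4 * e) * (-(cw4 + cz4 * z3 - c) * e) * c^2 + (-cw4 * c) * (-(w4 + z4 * cz3 - e) * c) * e^2)
  + (w4 * e) * (cw4 * c) + ((w4 + z4 * cz3 - e) * c) * ((cw4 + cz4 * z3 - c) * e) + 1 = 0"
  by algebra

lemma real_eq_complex: "complex_of_real (- 2 * Re (X1 + X2) - 2 * Re (X1 * cnj X2 * g) + (cmod X1)^2 + (cmod X2)^2 + 1)
  = -(X1 + cnj X1) - (X2 + cnj X2) - (X1 * cnj X2 * g + cnj X1 * X2 * cnj g) + X1 * cnj X1 + X2 * cnj X2 + 1"
  unfolding cmod_power2 by (simp add: complex_eq_iff power2_eq_square algebra_simps)

lemma expA: "cnj (exp (\<i> * of_real A)) = exp (- \<i> * of_real A)"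
  "exp (\<i> * of_real A) * exp (- \<i> * of_real A) = 1"
  "exp (\<i> * of_real A) + exp (- \<i> * of_real A) = of_real (2 * cos A)"
  "exp (- 2 * \<i> * of_real A) = (exp (- \<i> * of_real A))^2"
  "cmod (exp (\<i> * of_real A)) = 1"
proof -
  show "cnj (exp (\<i> * of_real A)) = exp (- \<i> * of_real A)" by (simp add: exp_cnj)
  show "exp (\<i> * of_real A) * exp (- \<i> * of_real A) = 1" by (simp flip: exp_add)
  show "exp (\<i> * of_real A) + exp (- \<i> * of_real A) = of_real (2 * cos A)"
    by (simp add: complex_eq_iff Re_exp Im_exp)
  show "exp (- 2 * \<i> * of_real A) = (exp (- \<i> * of_real A))^2"
    by (simp add: power2_eq_square flip: exp_add) (simp add: mult.assoc)
  show "cmod (exp (\<i> * of_real A)) = 1" by simp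
qed

lemma cos_nonneg_bound: "-pi < (A::real) \<Longrightarrow> A \<le> pi \<Longrightarrow> cos A \<ge> 0 \<Longrightarrow> -pi/2 \<le> A \<and> A \<le> pi/2"
  by (smt (verit) cos_minus cos_monotone_0_pi cos_monotone_minus_pi_0
    cos_pi_half minus_divide_divide minus_divide_right minus_pi_half_less_zero)

lemma re_mult_cnj: "Re (z * cnj z) = (cmod z)^2"
  unfolding cmod_power2 by (simp add: power2_eq_square)

lemma Mset_nf:
  assumes cw3: "cmod w3 = 1" and n3: "w3 + cnj w3 + z3 * cnj z3 = 0"
    and n4: "w4 + cnj w4 + z4 * cnj z4 = 0" and w4: "w4 \<noteq> 0"
    and H: "w4 + z4 * cnj z3 + cnj w3 \<noteq> 0"
  shows "Fv (e1, e3, mk3 w3 z3 1, mk3 w4 z4 1) \<in> Mset"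
proof -
  define e where "e = - cnj w3"
  define A where "A = Arg e"
  have e0: "e \<noteq> 0" "cmod e = 1" using cw3 by (auto simp: e_def)
  have eA: "e = exp (\<i> * of_real A)" using Arg_eq[OF e0(1)] e0(2) by (simp add: A_def)
  define c where "c = exp (- \<i> * of_real A)"
  have ce: "cnj e = c" "e * c = 1" "e + c = of_real (2 * cos A)"
    using expA[of A] by (simp_all add: eA c_def)
  have "cnj e = - w3" by (simp add: e_def)
  hence w3c: "w3 = - c" using ce(1) by (metis minus_minus)
  have c0: "c \<noteq> 0" using ce(2) by auto
  define X1 where "X1 = w4 / w3"
  define X2 where "X2 = (w4 + z4 * cnj z3 + cnj w3) / cnj w3"
  have X1e: "X1 = - w4 * e" using ce(2) c0 by (simp add: X1_def w3c field_simps)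
  have cw: "cnj w3 = - e" by (simp add: e_def)
  have X2e: "X2 = - (w4 + z4 * cnj z3 - e) * c"
  proof -
    have "X2 = (w4 + z4 * cnj z3 - e) / (- e)" by (simp add: X2_def cw)
    also have "\<dots> = - (w4 + z4 * cnj z3 - e) * (e * c) / e" using ce(2) e0(1) by (simp add: field_simps)
    also have "\<dots> = - (w4 + z4 * cnj z3 - e) * c" using e0(1) by simp
    finally show ?thesis .
  qed
  have cc: "cnj c = e" using ce(1) by (metis complex_cnj_cnj)
  have cX1: "cnj X1 = - cnj w4 * c" using X1e ce by simp
  have cX2: "cnj X2 = - (cnj w4 + cnj z4 * z3 - c) * e" using X2e ce cc by (simp add: mult.commute)
  have X10: "X1 \<noteq> 0" using w4 e0 by (simp add: X1e)
  have w30: "w3 \<noteq> 0" using cw3 by auto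
  have X20: "X2 \<noteq> 0" using H w30 by (simp add: X2_def)
  have "- c + - e + z3 * cnj z3 = 0" using n3 by (simp only: w3c complex_cnj_minus cc)
  hence ec3: "e + c = z3 * cnj z3" by algebra
  have n4': "w4 + cnj w4 = - z4 * cnj z4" using n4 by (simp add: algebra_simps eq_neg_iff_add_eq_0)
  have cc2: "cnj (c^2) = e^2" using cc by simp
  have E: "-(X1 + cnj X1) - (X2 + cnj X2) - (X1 * cnj X2 * c^2 + cnj X1 * X2 * cnj (c^2)) + X1 * cnj X1 + X2 * cnj X2 + 1 = 0"
    unfolding cc2 cX1 cX2 unfolding X1e X2e using ce(2) n4' ec3 by algebra
  have eq: "- 2 * Re (X1 + X2) - 2 * Re (X1 * cnj X2 * exp (- 2 * \<i> * of_real A)) + (cmod X1)^2 + (cmod X2)^2 + 1 = 0"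
  proof -
    have g: "exp (- 2 * \<i> * of_real A) = c^2" unfolding c_def by (rule expA(4))
    have "complex_of_real (- 2 * Re (X1 + X2) - 2 * Re (X1 * cnj X2 * c^2) + (cmod X1)^2 + (cmod X2)^2 + 1) = 0"
      by (subst real_eq_complex) (rule E)
    thus ?thesis unfolding g of_real_eq_0_iff .
  qed
  have "Re e \<ge> 0"
  proof -
    have "Re e + Re c = (cmod z3)^2" using ec3 re_mult_cnj[of z3] by (metis plus_complex.sel(1))
    moreover have "Re c = Re e" by (simp flip: ce(1))
    ultimately show ?thesis using zero_le_power2[of "cmod z3"] by linarith
  qed
  moreover have "Re e = cos A" unfolding eA by (simp add: Re_exp)
  ultimately have cosA: "cos A \<ge> 0" by simp
  have Ab: "- pi / 2 \<le> A \<and> A \<le> pi / 2"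
    using cos_nonneg_bound[of A] mpi_less_Arg[of e] Arg_le_pi[of e] cosA unfolding A_def by blast
  have "X1 * c = - w4 * (e * c)" by (simp add: X1e mult.assoc)
  hence "X1 * exp (- \<i> * of_real A) = - w4" using ce(2) by (simp add: c_def)
  hence "Re (X1 * exp (- \<i> * of_real A)) = - Re w4" by simp
  moreover have "Re w4 \<le> 0"
  proof -
    have "Re w4 + Re w4 = - (Re z4 * Re z4 + Im z4 * Im z4)" using arg_cong[OF n4', of Re] by simp
    moreover have "Re z4 * Re z4 + Im z4 * Im z4 \<ge> 0" by simp
    ultimately show ?thesis by linarith
  qed
  ultimately have R: "Re (X1 * exp (- \<i> * of_real A)) \<ge> 0" by simp
  have "Fv (e1, e3, mk3 w3 z3 1, mk3 w4 z4 1) = (X1, X2, A)"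
    by (simp only: Fv_nf X1_def X2_def A_def e_def)
  thus ?thesis using X10 X20 eq Ab R by (simp only: Mset_def mem_Collect_eq prod.case) blast
qed

lemma nf_Mset:
  assumes "(e1, e3, mk3 w3 z3 1, mk3 w4 z4 1) \<in> Dset" "cmod w3 = 1"
  shows "Fv (e1, e3, mk3 w3 z3 1, mk3 w4 z4 1) \<in> Mset"
proof -
  have n: "mk3 w3 z3 1 \<in> null_vecs" "mk3 w4 z4 1 \<in> null_vecs"
    and h: "herm e3 (mk3 w4 z4 1) \<noteq> 0" "herm (mk3 w3 z3 1) (mk3 w4 z4 1) \<noteq> 0"
    using assms(1) by (auto simp: Dset_def)
  have n3: "w3 + cnj w3 + z3 * cnj z3 = 0" and n4: "w4 + cnj w4 + z4 * cnj z4 = 0"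
    using n mk3_null by auto
  have w4: "w4 \<noteq> 0" using h(1) by (simp add: herm_def e3_def)
  have "herm (mk3 w4 z4 1) (mk3 w3 z3 1) \<noteq> 0" using h(2) herm_cnj[of "mk3 w4 z4 1" "mk3 w3 z3 1"] by auto
  hence H: "w4 + z4 * cnj z3 + cnj w3 \<noteq> 0" by (simp add: herm_mk3)
  show ?thesis using Mset_nf[OF assms(2) n3 n4 w4 H] .
qed

lemma Fv_Mset: assumes v: "v \<in> Dset" shows "Fv v \<in> Mset"
proof -
  obtain P1 P2 P3 P4 where vv: "v = (P1, P2, P3, P4)" by (cases v)
  obtain U w3 z3 w4 z4 where U: "unitary21 U" "cmod w3 = 1"
     "act4 U (Pm (P1, P2, P3, P4)) = Pm (e1, e3, mk3 w3 z3 1, mk3 w4 z4 1)"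
     "(e1, e3, mk3 w3 z3 1, mk3 w4 z4 1) \<in> Dset"
    using normal_form v vv by blast
  have q: "Pm v \<in> quads" using v quads_Pm by blast
  have "Fv v = tau0 (Pm v)" by (simp add: tau0_Pm)
  also have "\<dots> = tau0 (act4 U (Pm v))" using tau0_act4[OF U(1) q] by simp
  also have "\<dots> = Fv (e1, e3, mk3 w3 z3 1, mk3 w4 z4 1)" using U(3) vv by (simp add: tau0_Pm)
  finally show ?thesis using nf_Mset[OF U(4) U(2)] by simp
qed

lemma tau0_Mset: "q \<in> quads \<Longrightarrow> tau0 q \<in> Mset"
  using quads_Pm tau0_Pm Fv_Mset by metis

definition s3f :: "complex \<times> complex \<times> real \<Rightarrow> real" where
  "s3f m = sqrt (2 * cos (snd (snd m)))"
definition s4f :: "complex \<times> complex \<times> real \<Rightarrow> real" where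
  "s4f m = sqrt (2 * Re (fst m * exp (- \<i> * of_real (snd (snd m)))))"
definition Kf :: "complex \<times> complex \<times> real \<Rightarrow> complex" where
  "Kf m = - fst (snd m) * exp (\<i> * of_real (snd (snd m))) + fst m * exp (- \<i> * of_real (snd (snd m)))
          + exp (\<i> * of_real (snd (snd m)))"

definition psi :: "(complex \<times> complex \<times> real) \<times> complex \<times> complex \<Rightarrow> cvec \<times> cvec \<times> cvec \<times> cvec" where
  "psi t = (e1, e3,
     mk3 (- exp (- \<i> * of_real (snd (snd (fst t))))) (of_real (s3f (fst t)) * fst (snd t)) 1,
     mk3 (- fst (fst t) * exp (- \<i> * of_real (snd (snd (fst t))))) (of_real (s4f (fst t)) * snd (snd t)) 1)"

definition Tset :: "((complex \<times> complex \<times> real) \<times> complex \<times> complex) set" where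
  "Tset = {t. fst t \<in> Mset \<and> fst (snd t) \<in> sphere 0 1 \<and> snd (snd t) \<in> sphere 0 1 \<and>
     of_real (s4f (fst t)) * snd (snd t) * of_real (s3f (fst t)) * cnj (fst (snd t)) = Kf (fst t)}"

lemma Mset_props:
  assumes "(X1, X2, A) \<in> Mset"
  shows "X1 \<noteq> 0" "X2 \<noteq> 0" "- pi / 2 \<le> A" "A \<le> pi / 2" "cos A \<ge> 0"
    "Re (X1 * exp (- \<i> * of_real A)) \<ge> 0"
    "- 2 * Re (X1 + X2) - 2 * Re (X1 * cnj X2 * exp (- 2 * \<i> * of_real A)) + (cmod X1)^2 + (cmod X2)^2 + 1 = 0"
  using assms cos_ge_zero[of A] by (auto simp: Mset_def)

lemma sq_cnj_real: "complex_of_real r * u * cnj (complex_of_real r * u) = complex_of_real (r^2) * (u * cnj u)"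
  by (simp add: power2_eq_square)

lemma unit_cnj: "cmod u = 1 \<Longrightarrow> u * cnj u = 1"
  by (simp add: complex_norm_square[symmetric])

lemma Arg_expA: "-pi < A \<Longrightarrow> A \<le> pi \<Longrightarrow> Arg (exp (\<i> * of_real A)) = A"
  by (subst Arg_exp) auto

lemma psi_props:
  assumes t: "t \<in> Tset"
  shows "psi t \<in> Dset" "Fv (psi t) = fst t"
proof -
  obtain X1 X2 A u v where tt: "t = ((X1, X2, A), u, v)" by (metis prod.exhaust)
  have M: "(X1, X2, A) \<in> Mset" and u: "cmod u = 1" and v: "cmod v = 1"
    and con: "of_real (s4f (X1, X2, A)) * v * of_real (s3f (X1, X2, A)) * cnj u = Kf (X1, X2, A)"
    using t tt by (auto simp: Tset_def)
  note P = Mset_props[OF M]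
  define e where "e = exp (\<i> * of_real A)"
  define c where "c = exp (- \<i> * of_real A)"
  have ec: "cnj e = c" "e * c = 1" "e + c = of_real (2 * cos A)" "cnj c = e"
    using expA[of A] by (simp_all add: e_def c_def) (metis complex_cnj_cnj)
  have e0: "e \<noteq> 0" "c \<noteq> 0" using ec(2) by auto
  define s3 where "s3 = s3f (X1, X2, A)"
  define s4 where "s4 = s4f (X1, X2, A)"
  have s3s: "s3^2 = 2 * cos A" using P(5) by (simp add: s3_def s3f_def)
  have s4s: "s4^2 = 2 * Re (X1 * c)" using P(6) by (simp add: s4_def s4f_def c_def)
  have K: "Kf (X1, X2, A) = - X2 * e + X1 * c + e" by (simp add: Kf_def e_def c_def)
  have ps: "psi t = (e1, e3, mk3 (- c) (of_real s3 * u) 1, mk3 (- X1 * c) (of_real s4 * v) 1)"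
    by (simp add: psi_def tt c_def s3_def s4_def)
  have n3: "mk3 (- c) (of_real s3 * u) 1 \<in> null_vecs"
    unfolding mk3_null sq_cnj_real unit_cnj[OF u] s3s using ec
    by (simp add: algebra_simps)
  have "X1 * c + cnj (X1 * c) = of_real (2 * Re (X1 * c))" by (rule complex_add_cnj)
  hence n4: "mk3 (- X1 * c) (of_real s4 * v) 1 \<in> null_vecs"
    unfolding mk3_null sq_cnj_real unit_cnj[OF v] s4s by (simp add: algebra_simps)
  have h43: "herm (mk3 (- X1 * c) (of_real s4 * v) 1) (mk3 (- c) (of_real s3 * u) 1) = - X2 * e"
  proof -
    have "herm (mk3 (- X1 * c) (of_real s4 * v) 1) (mk3 (- c) (of_real s3 * u) 1)
       = - X1 * c + of_real s4 * v * of_real s3 * cnj u - e"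
      by (simp add: herm_mk3 ec)
    also have "\<dots> = - X2 * e" using con K by (simp add: s3_def s4_def)
    finally show ?thesis .
  qed
  have h34: "herm (mk3 (- c) (of_real s3 * u) 1) (mk3 (- X1 * c) (of_real s4 * v) 1) \<noteq> 0"
    using h43 herm_cnj[of "mk3 (- c) (of_real s3 * u) 1" "mk3 (- X1 * c) (of_real s4 * v) 1"] P(2) e0 by auto
  show "psi t \<in> Dset" unfolding ps Dset_def using n3 n4 h34 e1_null e3_null P(1) e0
    by (simp add: herm_def e1_def e3_def)
  have A: "Arg e = A" unfolding e_def using P(3) P(4) using pi_gt_zero by (intro Arg_expA) linarith+
  have "Fv (psi t) = (X1, X2, A)"
    unfolding ps Fv_nf using e0 A h43 by (simp add: ec herm_mk3)
  thus "Fv (psi t) = fst t" using tt by simp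
qed

lemma fiber_alg: "e * c = (1::complex) \<Longrightarrow>
  -(X1+cX1) - (X2+cX2) - (X1 * cX2 * c^2 + cX1 * X2 * e^2) + X1 * cX1 + X2 * cX2 + 1 = 0 \<Longrightarrow>
  (-X2 * e + X1 * c + e) * (-cX2 * c + cX1 * e + c) = (e + c) * (X1 * c + cX1 * e)"
  by algebra

lemma T_surj: assumes M: "m \<in> Mset" shows "\<exists>u v. (m, u, v) \<in> Tset"
proof -
  obtain X1 X2 A where mm: "m = (X1, X2, A)" by (metis prod.exhaust)
  note P = Mset_props[OF M[unfolded mm]]
  define e where "e = exp (\<i> * of_real A)"
  define c where "c = exp (- \<i> * of_real A)"
  have ec: "cnj e = c" "e * c = 1" "e + c = of_real (2 * cos A)" "cnj c = e"
    using expA[of A] by (simp_all add: e_def c_def) (metis complex_cnj_cnj)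
  define s3 where "s3 = s3f m"
  define s4 where "s4 = s4f m"
  have s3s: "s3^2 = 2 * cos A" "s3 \<ge> 0" using P(5) by (simp_all add: s3_def s3f_def mm)
  have s4s: "s4^2 = 2 * Re (X1 * c)" "s4 \<ge> 0" using P(6) by (simp_all add: s4_def s4f_def c_def mm)
  define K where "K = Kf m"
  have K: "K = - X2 * e + X1 * c + e" by (simp add: K_def Kf_def e_def c_def mm)
  have cK: "cnj K = - cnj X2 * c + cnj X1 * e + c" by (simp add: K ec)
  have g: "exp (- 2 * \<i> * of_real A) = c^2" unfolding c_def by (rule expA(4))
  have "complex_of_real (- 2 * Re (X1 + X2) - 2 * Re (X1 * cnj X2 * c^2) + (cmod X1)^2 + (cmod X2)^2 + 1) = 0"
    using P(7) unfolding g by simp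
  hence E: "-(X1 + cnj X1) - (X2 + cnj X2) - (X1 * cnj X2 * c^2 + cnj X1 * X2 * e^2) + X1 * cnj X1 + X2 * cnj X2 + 1 = 0"
    unfolding real_eq_complex using ec(4) by simp
  have "K * cnj K = (e + c) * (X1 * c + cnj X1 * e)"
    unfolding cK unfolding K by (rule fiber_alg[OF ec(2) E])
  also have "X1 * c + cnj X1 * e = of_real (2 * Re (X1 * c))"
    using complex_add_cnj[of "X1 * c"] ec(4) by (simp only: complex_cnj_mult)
  finally have "complex_of_real ((cmod K)^2) = complex_of_real ((s3 * s4)^2)"
    unfolding complex_norm_square[symmetric] ec(3) using s3s s4s by (simp add: power_mult_distrib)
  hence "(cmod K)^2 = (s3 * s4)^2" using of_real_eq_iff by blast
  hence nK: "cmod K = s3 * s4" using s3s(2) s4s(2) by (simp add: power2_eq_iff_nonneg)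
  show ?thesis
  proof (cases "s3 * s4 = 0")
    case True
    hence "K = 0" using nK True by (metis norm_eq_zero)
    hence "(m, 1, 1) \<in> Tset" using True M by (auto simp: Tset_def K_def s3_def s4_def)
    thus ?thesis by blast
  next
    case False
    define v where "v = K / of_real (s3 * s4)"
    have "cmod v = 1" using False nK s3s(2) s4s(2) by (simp add: v_def norm_divide norm_mult)
    moreover have "of_real s4 * v * of_real s3 * cnj 1 = K" using False by (simp add: v_def field_simps)
    ultimately have "(m, 1, v) \<in> Tset" using M by (auto simp: Tset_def K_def s3_def s4_def)
    thus ?thesis by blast
  qed
qed

lemma rot_exists:
  fixes s3 s4 :: complex
  assumes u: "cmod u = 1" and u': "cmod u' = 1" and v: "cmod v = 1" and v': "cmod v' = 1"
    and con: "s4 * v * s3 * cnj u = s4 * v' * s3 * cnj u'"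
  shows "\<exists>c0. cmod c0 = 1 \<and> s3 * u' = c0 * (s3 * u) \<and> s4 * v' = c0 * (s4 * v)"
proof -
  have u0: "u \<noteq> 0" and v0: "v \<noteq> 0" using u v by auto
  have uc: "u * cnj u = 1" "u' * cnj u' = 1" using u u' unit_cnj by auto
  show ?thesis
  proof (cases "s3 = 0")
    case True
    show ?thesis
    proof (cases "s4 = 0")
      case True
      with \<open>s3 = 0\<close> show ?thesis by (intro exI[of _ 1]) simp
    next
      case False
      with \<open>s3 = 0\<close> show ?thesis using v v' v0 by (intro exI[of _ "v' / v"]) (simp add: norm_divide)
    qed
  next
    case s3: False
    have "s4 * v' = (u' / u) * (s4 * v)"
    proof (cases "s4 = 0")
      case False
      have "v * cnj u = v' * cnj u'" using con s3 False by simp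
      hence "v * cnj u * (u * u') = v' * cnj u' * (u * u')" by simp
      hence "v * u' * (u * cnj u) = v' * u * (u' * cnj u')" by (simp add: algebra_simps)
      hence "v * u' = v' * u" using uc by simp
      thus ?thesis using u0 by (simp add: field_simps)
    qed simp
    thus ?thesis using s3 u u' u0 by (intro exI[of _ "u' / u"]) (simp add: norm_divide)
  qed
qed

lemma diag3_e1: "diag3 1 c0 1 *v e1 = e1" and diag3_e3: "diag3 1 c0 1 *v e3 = e3"
  and diag3_mk3: "diag3 1 c0 1 *v mk3 w z 1 = mk3 w (c0 * z) 1"
  by (simp_all add: diag3_mult e1_def e3_def)

lemma T_fiber_equiv:
  assumes t: "t \<in> Tset" and t': "t' \<in> Tset" and f: "fst t = fst t'"
  shows "equiv4 (Pm (psi t)) (Pm (psi t'))"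
proof -
  obtain m u v where tt: "t = (m, u, v)" by (metis prod.exhaust)
  obtain u' v' where tt': "t' = (m, u', v')" using f tt by (metis prod.exhaust fst_conv)
  have uv: "cmod u = 1" "cmod u' = 1" "cmod v = 1" "cmod v' = 1"
    and con: "of_real (s4f m) * v * of_real (s3f m) * cnj u = Kf m"
      "of_real (s4f m) * v' * of_real (s3f m) * cnj u' = Kf m"
    using t t' tt tt' by (auto simp: Tset_def)
  obtain c0 where c0: "cmod c0 = 1" "of_real (s3f m) * u' = c0 * (of_real (s3f m) * u)"
     "of_real (s4f m) * v' = c0 * (of_real (s4f m) * v)"
    using rot_exists[OF uv(1) uv(2) uv(3) uv(4)] con by metis
  have R: "unitary21 (diag3 1 c0 1)" using c0(1) by (intro diag3_unitary) (simp_all add: unit_cnj)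
  have "Uv (diag3 1 c0 1) (psi t) = psi t'"
    unfolding Uv_def psi_def tt tt' by (simp add: diag3_e1 diag3_e3 diag3_mk3 c0(2,3)[symmetric])
  hence "act4 (diag3 1 c0 1) (Pm (psi t)) = Pm (psi t')" by (simp add: act4_Pm)
  thus ?thesis using R unfolding equiv4_def by metis
qed

lemma polar_unit: "\<exists>u. cmod u = 1 \<and> complex_of_real (cmod z) * u = z"
proof (cases "z = 0")
  case True thus ?thesis by (intro exI[of _ 1]) simp
next
  case False
  have "cmod (sgn z) = 1" using False by (simp add: norm_sgn)
  moreover have "complex_of_real (cmod z) * sgn z = z" using False
    by (simp add: sgn_div_norm divide_inverse scaleR_conv_of_real)
  ultimately show ?thesis by blast
qed

lemma sqrt_cmod: "r = (cmod z)^2 \<Longrightarrow> sqrt r = cmod z"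
  by simp

lemma quads_T:
  assumes q: "q \<in> quads"
  shows "\<exists>t \<in> Tset. equiv4 q (Pm (psi t))"
proof -
  obtain v where v: "v \<in> Dset" "q = Pm v" using q quads_Pm by blast
  obtain P1 P2 P3 P4 where vv: "v = (P1, P2, P3, P4)" by (cases v)
  obtain U w3 z3 w4 z4 where U: "unitary21 U" "cmod w3 = 1"
     "act4 U (Pm (P1, P2, P3, P4)) = Pm (e1, e3, mk3 w3 z3 1, mk3 w4 z4 1)"
     "(e1, e3, mk3 w3 z3 1, mk3 w4 z4 1) \<in> Dset"
    using normal_form v vv by blast
  have eq: "equiv4 q (Pm (e1, e3, mk3 w3 z3 1, mk3 w4 z4 1))"
    using U v vv unfolding equiv4_def by metis
  define m where "m = Fv (e1, e3, mk3 w3 z3 1, mk3 w4 z4 1)"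
  have M: "m \<in> Mset" using nf_Mset[OF U(4) U(2)] m_def by simp
  have n: "mk3 w3 z3 1 \<in> null_vecs" "mk3 w4 z4 1 \<in> null_vecs" using U(4) by (auto simp: Dset_def)
  have n3: "w3 + cnj w3 + z3 * cnj z3 = 0" and n4: "w4 + cnj w4 + z4 * cnj z4 = 0"
    using n mk3_null by auto
  define X1 where "X1 = w4 / w3"
  define X2 where "X2 = (w4 + z4 * cnj z3 + cnj w3) / cnj w3"
  define e where "e = - cnj w3"
  define A where "A = Arg e"
  have mm: "m = (X1, X2, A)" by (simp add: m_def Fv_nf X1_def X2_def A_def e_def)
  have e0: "e \<noteq> 0" "cmod e = 1" using U(2) by (auto simp: e_def)
  have w30: "w3 \<noteq> 0" using U(2) by auto
  have eA: "e = exp (\<i> * of_real A)" using Arg_eq[OF e0(1)] e0(2) by (simp add: A_def)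
  define c where "c = exp (- \<i> * of_real A)"
  have ec: "cnj e = c" "e * c = 1" "e + c = of_real (2 * cos A)" "cnj c = e"
    using expA[of A] by (simp_all add: eA c_def) (metis complex_cnj_cnj)
  have "cnj e = - w3" by (simp add: e_def)
  hence w3c: "w3 = - c" using ec(1) by (metis minus_minus)
  have "complex_of_real (2 * cos A) = z3 * cnj z3" using n3 ec(3) by (simp add: w3c ec(4) algebra_simps)
  hence "complex_of_real (2 * cos A) = complex_of_real ((cmod z3)^2)" by (metis complex_norm_square)
  hence "2 * cos A = (cmod z3)^2" using of_real_eq_iff by blast
  hence s3: "s3f m = cmod z3" by (simp add: s3f_def mm)
  have X1c: "X1 * c = - w4" using w30 by (simp add: X1_def w3c)
  have "complex_of_real (2 * Re (X1 * c)) = z4 * cnj z4"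
    unfolding X1c using n4 complex_add_cnj[of w4] by (simp add: algebra_simps) (metis add_eq_0_iff2)
  hence "complex_of_real (2 * Re (X1 * c)) = complex_of_real ((cmod z4)^2)" by (metis complex_norm_square)
  hence "2 * Re (X1 * c) = (cmod z4)^2" using of_real_eq_iff by blast
  hence s4: "s4f m = cmod z4" by (simp add: s4f_def mm c_def)
  obtain u where u: "cmod u = 1" "complex_of_real (cmod z3) * u = z3" using polar_unit by blast
  obtain v4 where v4: "cmod v4 = 1" "complex_of_real (cmod z4) * v4 = z4" using polar_unit by blast
  have K: "Kf m = z4 * cnj z3"
  proof -
    have "- X2 * e = X2 * cnj w3" by (simp add: e_def)
    also have "\<dots> = w4 + z4 * cnj z3 + cnj w3" using w30 by (simp add: X2_def)
    also have "\<dots> = w4 + z4 * cnj z3 - e" by (simp add: e_def)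
    finally have "- X2 * e = w4 + z4 * cnj z3 - e" .
    moreover have "Kf m = - X2 * e + X1 * c + e" by (simp add: Kf_def mm eA c_def)
    ultimately show ?thesis using X1c by simp
  qed
  have con: "of_real (s4f m) * v4 * of_real (s3f m) * cnj u = Kf m"
  proof -
    have "of_real (s4f m) * v4 * of_real (s3f m) * cnj u = (of_real (cmod z4) * v4) * cnj (of_real (cmod z3) * u)"
      by (simp add: s3 s4)
    thus ?thesis using u v4 K by simp
  qed
  have T: "(m, u, v4) \<in> Tset" using M u v4 con by (simp add: Tset_def)
  have "psi (m, u, v4) = (e1, e3, mk3 w3 z3 1, mk3 w4 z4 1)"
  proof -
    have "- X1 * c = w4" using X1c by simp
    thus ?thesis unfolding psi_def using u v4 s3 s4 by (simp add: mm c_def w3c)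
  qed
  thus ?thesis using T eq by metis
qed

section \<open>Topology\<close>

lemma istopology_quot: "istopology (\<lambda>U. U \<subseteq> f ` topspace X \<and> openin X {x \<in> topspace X. f x \<in> U})"
proof -
  have 1: "S \<inter> T \<subseteq> f ` topspace X \<and> openin X {x \<in> topspace X. f x \<in> S \<inter> T}"
    if "S \<subseteq> f ` topspace X \<and> openin X {x \<in> topspace X. f x \<in> S}"
       "T \<subseteq> f ` topspace X \<and> openin X {x \<in> topspace X. f x \<in> T}" for S T
  proof -
    have "{x \<in> topspace X. f x \<in> S \<inter> T} = {x \<in> topspace X. f x \<in> S} \<inter> {x \<in> topspace X. f x \<in> T}" by auto
    thus ?thesis using that by auto
  qed
  have 2: "\<Union>K \<subseteq> f ` topspace X \<and> openin X {x \<in> topspace X. f x \<in> \<Union>K}"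
    if K: "\<forall>U\<in>K. U \<subseteq> f ` topspace X \<and> openin X {x \<in> topspace X. f x \<in> U}" for K
  proof -
    have "{x \<in> topspace X. f x \<in> \<Union>K} = \<Union> ((\<lambda>U. {x \<in> topspace X. f x \<in> U}) ` K)" by auto
    moreover have "openin X (\<Union> ((\<lambda>U. {x \<in> topspace X. f x \<in> U}) ` K))" using K by auto
    ultimately show ?thesis using K by auto
  qed
  show ?thesis unfolding istopology_def using 1 2 by blast
qed

lemma openin_quot: "openin (quotient_topology X f) U \<longleftrightarrow> U \<subseteq> f ` topspace X \<and> openin X {x \<in> topspace X. f x \<in> U}"
  by (simp only: quotient_topology_def topology_inverse'[OF istopology_quot])

lemma topspace_quot: "topspace (quotient_topology X f) = f ` topspace X"
proof -
  have e: "{x \<in> topspace X. f x \<in> f ` topspace X} = topspace X" by auto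
  have "openin (quotient_topology X f) (f ` topspace X)" unfolding openin_quot e by auto
  hence "f ` topspace X \<subseteq> topspace (quotient_topology X f)" by (rule openin_subset)
  moreover have "topspace (quotient_topology X f) \<subseteq> f ` topspace X"
    using openin_quot[of X f "topspace (quotient_topology X f)"] by simp
  ultimately show ?thesis by blast
qed

lemma quotient_map_quot: "quotient_map X (quotient_topology X f) f"
  unfolding quotient_map_def topspace_quot openin_quot by auto

lemma topspace_bdry: "topspace bdry_top = bdry"
  by (simp add: bdry_top_def topspace_quot bdry_def)

lemma quads_sub: "quads \<subseteq> bdry \<times> bdry \<times> bdry \<times> bdry"
  by (auto simp: quads_def)

lemma topspace_quads: "topspace quads_top = quads"
  using quads_sub by (auto simp: quads_top_def topspace_bdry)

lemma topspace_config: "topspace config_top = orbit4 ` quads"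
  by (simp add: config_top_def topspace_quot topspace_quads)

lemma orbit4_quotient: "quotient_map quads_top config_top orbit4"
  unfolding config_top_def by (rule quotient_map_quot)

lemma cline_quotient: "quotient_map (top_of_set null_vecs) bdry_top cline"
  unfolding bdry_top_def by (rule quotient_map_quot)

lemma cont_scale: "continuous_on S (\<lambda>x::cvec. c *s x)"
  unfolding vector_scalar_mult_def by (intro continuous_intros)

lemma cline_open: "open_map (top_of_set null_vecs) bdry_top cline"
  unfolding open_map_def
proof (intro allI impI)
  fix W assume W: "openin (top_of_set null_vecs) W"
  then obtain G where G: "open G" "W = null_vecs \<inter> G" by (auto simp: openin_open)
  have Wn: "W \<subseteq> null_vecs" using G by auto
  have eq: "{x \<in> topspace (top_of_set null_vecs). cline x \<in> cline ` W} =
     (\<Union>c \<in> {c. c \<noteq> 0}. null_vecs \<inter> (\<lambda>x. c *s x) -` G)"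
  proof (intro set_eqI iffI)
    fix x assume "x \<in> {x \<in> topspace (top_of_set null_vecs). cline x \<in> cline ` W}"
    then obtain w where x: "x \<in> null_vecs" "w \<in> W" "cline x = cline w" by auto
    then obtain c where c: "c \<noteq> 0" "x = c *s w" using cline_eq_iff by blast
    hence "(1 / c) *s x = w" by (simp add: vector_smult_assoc)
    moreover have "1 / c \<noteq> 0" using c by simp
    ultimately show "x \<in> (\<Union>c \<in> {c. c \<noteq> 0}. null_vecs \<inter> (\<lambda>x. c *s x) -` G)" using x G
      by (intro UN_I[of "1 / c"]) auto
  next
    fix x assume "x \<in> (\<Union>c \<in> {c. c \<noteq> 0}. null_vecs \<inter> (\<lambda>x. c *s x) -` G)"
    then obtain c where c: "c \<noteq> 0" "x \<in> null_vecs" "c *s x \<in> G" by auto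
    hence w: "c *s x \<in> W" using G null_scale by auto
    have "cline x = cline (c *s x)" using c cline_scale by simp
    thus "x \<in> {x \<in> topspace (top_of_set null_vecs). cline x \<in> cline ` W}" using w c by auto
  qed
  have "openin (top_of_set null_vecs) (\<Union>c \<in> {c. c \<noteq> 0}. null_vecs \<inter> (\<lambda>x. c *s x) -` G)"
    by (intro openin_Union) (auto intro!: continuous_openin_preimage_gen cont_scale G(1))
  hence "openin bdry_top (cline ` W)"
    unfolding bdry_top_def openin_quot eq[symmetric] using Wn by auto
  thus "openin bdry_top (cline ` W)" .
qed

lemma open_map_prod:
  assumes f: "open_map X X' f" and g: "open_map Y Y' g"
  shows "open_map (prod_topology X Y) (prod_topology X' Y') (\<lambda>(x, y). (f x, g y))"
  unfolding open_map_def
proof (intro allI impI)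
  fix W assume W: "openin (prod_topology X Y) W"
  show "openin (prod_topology X' Y') ((\<lambda>(x, y). (f x, g y)) ` W)"
    unfolding openin_prod_topology_alt
  proof (intro allI impI)
    fix a b assume "(a, b) \<in> (\<lambda>(x, y). (f x, g y)) ` W"
    then obtain x y where xy: "(x, y) \<in> W" "a = f x" "b = g y" by auto
    have "\<exists>U V. openin X U \<and> openin Y V \<and> x \<in> U \<and> y \<in> V \<and> U \<times> V \<subseteq> W"
      using W xy(1) unfolding openin_prod_topology_alt by simp
    then obtain U V where UV: "openin X U" "openin Y V" "x \<in> U" "y \<in> V" "U \<times> V \<subseteq> W"
      by blast
    have "openin X' (f ` U)" "openin Y' (g ` V)" using f g UV unfolding open_map_def by auto
    moreover have "f ` U \<times> g ` V \<subseteq> (\<lambda>(x, y). (f x, g y)) ` W" using UV(5) by auto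
    moreover have "a \<in> f ` U" "b \<in> g ` V" using xy UV by auto
    ultimately show "\<exists>U V. openin X' U \<and> openin Y' V \<and> a \<in> U \<and> b \<in> V \<and> U \<times> V \<subseteq> (\<lambda>(x, y). (f x, g y)) ` W"
      by (intro exI[of _ "f ` U"] exI[of _ "g ` V"]) simp
  qed
qed

definition NN :: "(cvec \<times> cvec \<times> cvec \<times> cvec) topology" where
  "NN = prod_topology (top_of_set null_vecs) (prod_topology (top_of_set null_vecs)
          (prod_topology (top_of_set null_vecs) (top_of_set null_vecs)))"

definition BB :: "quad topology" where
  "BB = prod_topology bdry_top (prod_topology bdry_top (prod_topology bdry_top bdry_top))"

lemma NN_eu: "NN = top_of_set Nset"
  by (simp add: NN_def Nset_def)

lemma Pm_split: "Pm = (\<lambda>(x, y). (cline x, (\<lambda>(x, y). (cline x, (\<lambda>(x, y). (cline x, cline y)) y)) y))"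
  by (rule ext) (simp add: Pm_def split: prod.splits)

lemma Pm_open: "open_map NN BB Pm"
  unfolding NN_def BB_def Pm_split
  by (intro open_map_prod cline_open)

lemma Pm_cont: "continuous_map NN BB Pm"
proof -
  have c: "continuous_map (top_of_set null_vecs) bdry_top cline"
    using cline_quotient quotient_imp_continuous_map by blast
  show ?thesis unfolding NN_def BB_def Pm_split
    by (intro continuous_map_prod_top[THEN iffD2] disjI2 conjI c)
qed

lemma cont_herm [continuous_intros]:
  "continuous_on S f \<Longrightarrow> continuous_on S g \<Longrightarrow> continuous_on S (\<lambda>x. herm (f x) (g x))"
  unfolding herm_def by (intro continuous_intros)

lemma cont_mk3 [continuous_intros]:
  assumes "continuous_on S a" "continuous_on S b" "continuous_on S c"
  shows "continuous_on S (\<lambda>x. mk3 (a x) (b x) (c x))"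
  unfolding mk3_def
proof (rule continuous_on_vec_lambda)
  fix i :: 3
  show "continuous_on S (\<lambda>x. if i = 1 then a x else if i = 2 then b x else c x)"
    using assms by (cases "i = 1"; cases "i = 2") auto
qed

lemma Fv_alt: "Fv = (\<lambda>v. (crv (fst v) (fst (snd v)) (fst (snd (snd v))) (snd (snd (snd v))),
   crv (fst v) (fst (snd (snd v))) (fst (snd v)) (snd (snd (snd v))),
   Arg (cartv (fst v) (fst (snd v)) (fst (snd (snd v))))))"
  by (rule ext) (simp add: Fv_def split: prod.splits)

lemma Dset_herm: "v \<in> Dset \<Longrightarrow> herm (fst v) (fst (snd v)) \<noteq> 0 \<and> herm (fst v) (fst (snd (snd v))) \<noteq> 0 \<and>
   herm (fst v) (snd (snd (snd v))) \<noteq> 0 \<and> herm (fst (snd v)) (fst (snd (snd v))) \<noteq> 0 \<and>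
   herm (fst (snd v)) (snd (snd (snd v))) \<noteq> 0 \<and> herm (fst (snd (snd v))) (snd (snd (snd v))) \<noteq> 0"
  by (auto simp: Dset_def)

lemma cartv_not_nonpos: assumes v: "v \<in> Dset"
  shows "cartv (fst v) (fst (snd v)) (fst (snd (snd v))) \<notin> \<real>\<^sub>\<le>\<^sub>0"
proof
  let ?z = "cartv (fst v) (fst (snd v)) (fst (snd (snd v)))"
  assume z: "?z \<in> \<real>\<^sub>\<le>\<^sub>0"
  have h: "herm (fst (snd (snd v))) (fst v) \<noteq> 0" using Dset_herm[OF v] herm_cnj[of "fst (snd (snd v))" "fst v"] by auto
  have "?z \<noteq> 0" using Dset_herm[OF v] h by (simp add: cartv_def)
  hence "Re ?z < 0 \<and> Im ?z = 0" using z by (auto simp: complex_nonpos_Reals_iff complex_eq_iff)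
  hence "Arg ?z = pi" by (simp add: Arg_eq_pi)
  moreover have "Fv v \<in> Mset" using Fv_Mset v by blast
  hence "Arg ?z \<le> pi / 2" by (cases v) (auto simp: Fv_def Mset_def)
  ultimately show False using pi_gt_zero by linarith
qed

lemma Dset_rev: "(a, b, c, d) \<in> Dset \<Longrightarrow> herm b a \<noteq> 0 \<and> herm c a \<noteq> 0 \<and> herm d a \<noteq> 0 \<and>
   herm c b \<noteq> 0 \<and> herm d b \<noteq> 0 \<and> herm d c \<noteq> 0"
  unfolding Dset_def using herm_cnj[of b a] herm_cnj[of c a] herm_cnj[of d a] herm_cnj[of c b]
    herm_cnj[of d b] herm_cnj[of d c] by auto

lemma herm_swap0: "herm b a = 0 \<longleftrightarrow> herm a b = 0"
  using herm_cnj[of b a] by auto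

lemma Fv_cont: "continuous_on Dset Fv"
  unfolding Fv_alt crv_def
  by (intro continuous_intros continuous_on_Arg' cartv_not_nonpos)
     (auto simp: cartv_def Dset_def herm_swap0 intro!: continuous_intros)

lemma Dset_open: "openin (top_of_set Nset) Dset"
proof -
  define H where "H = {v. herm (fst v) (fst (snd v)) \<noteq> 0} \<inter> {v. herm (fst v) (fst (snd (snd v))) \<noteq> 0} \<inter>
     {v. herm (fst v) (snd (snd (snd v))) \<noteq> 0} \<inter> {v. herm (fst (snd v)) (fst (snd (snd v))) \<noteq> 0} \<inter>
     {v. herm (fst (snd v)) (snd (snd (snd v))) \<noteq> 0} \<inter> {v::cvec\<times>cvec\<times>cvec\<times>cvec. herm (fst (snd (snd v))) (snd (snd (snd v))) \<noteq> 0}"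
  have "open H" unfolding H_def
    by (intro open_Int open_Collect_neq continuous_intros)
  moreover have "Dset = Nset \<inter> H" by (auto simp: Dset_def Nset_def H_def)
  ultimately show ?thesis by (auto simp: openin_open)
qed

lemma quads_top_BB: "quads_top = subtopology BB quads"
  by (simp add: quads_top_def BB_def)

lemma tau0_cont: "continuous_map quads_top (top_of_set Mset) tau0"
proof -
  have "continuous_map quads_top euclidean tau0"
    unfolding continuous_map topspace_quads
  proof (intro conjI allI impI)
    show "tau0 ` quads \<subseteq> topspace euclidean" by simp
    fix V :: "(complex \<times> complex \<times> real) set" assume "openin euclidean V"
    hence V: "open V" by simp
    define W where "W = Dset \<inter> Fv -` V"
    have "openin (top_of_set Dset) W" unfolding W_def by (rule continuous_openin_preimage_gen[OF Fv_cont V])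
    hence "openin (top_of_set Nset) W" using Dset_open openin_trans by blast
    hence "openin BB (Pm ` W)" using Pm_open unfolding NN_eu open_map_def by blast
    moreover have "Pm ` W = {q \<in> quads. tau0 q \<in> V}"
    proof (intro set_eqI iffI)
      fix q assume "q \<in> Pm ` W"
      then obtain v where "v \<in> Dset" "Fv v \<in> V" "q = Pm v" by (auto simp: W_def)
      thus "q \<in> {q \<in> quads. tau0 q \<in> V}" using quads_Pm tau0_Pm by auto
    next
      fix q assume "q \<in> {q \<in> quads. tau0 q \<in> V}"
      then obtain v where "v \<in> Dset" "q = Pm v" "tau0 q \<in> V" using quads_Pm by auto
      thus "q \<in> Pm ` W" using tau0_Pm by (auto simp: W_def)
    qed
    ultimately show "openin quads_top {q \<in> quads. tau0 q \<in> V}"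
      unfolding quads_top_BB openin_subtopology by blast
  qed
  moreover have "tau0 ` topspace quads_top \<subseteq> Mset" using tau0_Mset topspace_quads by auto
  ultimately show ?thesis by (auto simp: continuous_map_in_subtopology)
qed

definition SS :: "(complex \<times> complex) set" where "SS = sphere 0 1 \<times> sphere 0 1"

definition gT :: "(complex \<times> complex \<times> real) \<times> complex \<times> complex \<Rightarrow> complex" where
  "gT t = of_real (s4f (fst t)) * snd (snd t) * of_real (s3f (fst t)) * cnj (fst (snd t)) - Kf (fst t)"

lemma Tset_alt: "Tset = {t \<in> Mset \<times> SS. gT t = 0}"
  by (auto simp: Tset_def SS_def gT_def)

lemma gT_cont: "continuous_on S gT"
  unfolding gT_def s3f_def s4f_def Kf_def by (intro continuous_intros)

lemma Tset_closed: "closedin (top_of_set (Mset \<times> SS)) Tset"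
  unfolding Tset_alt by (rule continuous_closedin_preimage_constant[OF gT_cont])

lemma SS_compact: "compact_space (top_of_set SS)"
  by (simp add: SS_def compact_space_subtopology compact_Times)

lemma fst_closed: "closed_map (top_of_set Tset) (top_of_set Mset) fst"
proof -
  have c: "closed_map (top_of_set (Mset \<times> SS)) (top_of_set Mset) fst"
    using closed_map_fst[OF SS_compact, of "top_of_set Mset"] by simp
  show ?thesis unfolding closed_map_def
  proof (intro allI impI)
    fix C assume "closedin (top_of_set Tset) C"
    hence "closedin (top_of_set (Mset \<times> SS)) C" using Tset_closed closedin_trans by blast
    thus "closedin (top_of_set Mset) (fst ` C)" using c unfolding closed_map_def by blast
  qed
qed

lemma fst_T_surj: "fst ` Tset = Mset"
proof
  show "fst ` Tset \<subseteq> Mset" by (auto simp: Tset_def)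
  show "Mset \<subseteq> fst ` Tset"
  proof
    fix m assume "m \<in> Mset"
    then obtain u v where "(m, u, v) \<in> Tset" using T_surj by blast
    thus "m \<in> fst ` Tset" by force
  qed
qed

lemma fst_quotient: "quotient_map (top_of_set Tset) (top_of_set Mset) fst"
proof (rule continuous_closed_imp_quotient_map)
  show "continuous_map (top_of_set Tset) (top_of_set Mset) fst"
    using fst_T_surj by (auto simp: continuous_map_in_subtopology intro!: continuous_intros)
  show "closed_map (top_of_set Tset) (top_of_set Mset) fst" by (rule fst_closed)
  show "fst ` topspace (top_of_set Tset) = topspace (top_of_set Mset)" using fst_T_surj by simp
qed

lemma psi_cont: "continuous_on Tset psi"
  unfolding psi_def s3f_def s4f_def by (intro continuous_intros)

lemma Psi_cont: "continuous_map (top_of_set Tset) quads_top (Pm \<circ> psi)"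
proof -
  have "continuous_map (top_of_set Tset) NN psi"
    unfolding NN_eu using psi_cont psi_props(1) by (auto simp: continuous_map_in_subtopology Dset_iff)
  hence "continuous_map (top_of_set Tset) BB (Pm \<circ> psi)" using Pm_cont continuous_map_compose by blast
  moreover have "(Pm \<circ> psi) ` Tset \<subseteq> quads"
  proof
    fix q assume "q \<in> (Pm \<circ> psi) ` Tset"
    then obtain t where "t \<in> Tset" "q = Pm (psi t)" by auto
    thus "q \<in> quads" using psi_props(1) quads_Pm by blast
  qed
  ultimately show ?thesis unfolding quads_top_BB by (auto simp: continuous_map_in_subtopology)
qed

lemma tau0_quotient: "quotient_map quads_top (top_of_set Mset) tau0"
proof (rule quotient_map_from_composition[OF Psi_cont tau0_cont])
  show "quotient_map (top_of_set Tset) (top_of_set Mset) (tau0 \<circ> (Pm \<circ> psi))"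
    using fst_quotient by (rule quotient_map_eq) (simp add: tau0_Pm psi_props(2))
qed

lemma tau_quotient: "quotient_map config_top (top_of_set Mset) tau"
proof -
  have e: "\<And>q. q \<in> topspace quads_top \<Longrightarrow> tau0 q = (tau \<circ> orbit4) q"
    by (simp add: topspace_quads tau_orbit4)
  have q: "quotient_map quads_top (top_of_set Mset) (tau \<circ> orbit4)"
    using tau0_quotient e by (rule quotient_map_eq)
  have c: "continuous_map config_top (top_of_set Mset) tau"
    using continuous_compose_quotient_map[OF orbit4_quotient] q quotient_imp_continuous_map by blast
  show ?thesis
    using quotient_map_from_composition[OF quotient_imp_continuous_map[OF orbit4_quotient] c q] .
qed

lemma tau_inj: "inj_on tau (topspace config_top)"
  unfolding topspace_config
proof (rule inj_onI)
  fix x y assume "x \<in> orbit4 ` quads" "y \<in> orbit4 ` quads" and e: "tau x = tau y"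
  then obtain q q' where q: "q \<in> quads" "x = orbit4 q" and q': "q' \<in> quads" "y = orbit4 q'" by auto
  have te: "tau0 q = tau0 q'" using e q q' tau_orbit4 by simp
  obtain t where t: "t \<in> Tset" "equiv4 q (Pm (psi t))" using quads_T[OF q(1)] by blast
  obtain t' where t': "t' \<in> Tset" "equiv4 q' (Pm (psi t'))" using quads_T[OF q'(1)] by blast
  have "tau0 q = tau0 (Pm (psi t))" using t(2) q(1) tau0_act4 unfolding equiv4_def by metis
  hence f1: "fst t = tau0 q" using psi_props(2)[OF t(1)] tau0_Pm by simp
  have "tau0 q' = tau0 (Pm (psi t'))" using t'(2) q'(1) tau0_act4 unfolding equiv4_def by metis
  hence f2: "fst t' = tau0 q'" using psi_props(2)[OF t'(1)] tau0_Pm by simp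
  have "equiv4 (Pm (psi t)) (Pm (psi t'))" using T_fiber_equiv t(1) t'(1) f1 f2 te by simp
  hence "equiv4 q q'" using t(2) t'(2) equiv4_trans equiv4_sym by blast
  thus "x = y" using q q' orbit4_eq by simp
qed

theorem theorem3p1:
  shows "homeomorphic_map config_top (subtopology euclidean Mset) tau \<and>
         config_top homeomorphic_space subtopology euclidean Mset"
proof -
  have h: "homeomorphic_map config_top (subtopology euclidean Mset) tau"
    unfolding homeomorphic_map_def using tau_quotient tau_inj by simp
  moreover have "config_top homeomorphic_space subtopology euclidean Mset"
    using h unfolding homeomorphic_space_def homeomorphic_map_maps by blast
  ultimately show ?thesis by blast
qed

end
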